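(* Let $q$ be a power of $2$ and $n=q^2+1$. For an integer $a$ with $1\le a\le n-1$, $a\in\mathrm{MinRep}_n$ if and only if $a\in[l(q+1)+1,(l+1)(q-1)]$ for some integer $l$ with $0\le l\le\frac q2-1$. Moreover, $|C_a|=4$ for every nonzero $a\in\mathrm{MinRep}_n$.
   Context: For $0\le s\le n-1$, $C_s=\{sq^i\bmod n:i\ge0\}$ is the $q$-cyclotomic coset of $s$ modulo $n$; its least element is its coset leader; $\mathrm{MinRep}_n$ is the set of all coset leaders modulo $n$. $[u,v]$ denotes the set of integers $u,u+1,\dots,v$. *)

theory Defs
  imports Main
begin

definition cyc_coset :: "nat \<Rightarrow> nat \<Rightarrow> nat \<Rightarrow> nat set" where
  "cyc_coset q n s = {s * q ^ i mod n | i. True}"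

definition MinRep :: "nat \<Rightarrow> nat \<Rightarrow> nat set" where
  "MinRep q n = {s. s < n \<and> s = Min (cyc_coset q n s)}"

end

theory Submission
  imports Defs
begin


lemma sq_mod:
  fixes q n x :: nat
  assumes n: "n = q^2+1" and x: "0 < x mod n"
  shows "(x*q^2) mod n = n - x mod n"
proof -
  define r where "r = x mod n"
  have np: "n > 0" using n by simp
  have rn: "r < n" using np r_def by simp
  have r0: "r > 0" using x r_def by simp
  have e1: "x*q^2 mod n = (r*q^2) mod n" by (simp add: r_def mod_mult_left_eq)
  obtain s where s: "r = Suc s" using r0 not0_implies_Suc by blast
  have "r*q^2 = s*n + (n-r)" using rn unfolding s n by (simp add: algebra_simps)
  then have "(r*q^2) mod n = (n - r) mod n" by simp
  also have "... = n - r" using r0 rn by simp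
  finally show ?thesis using e1 r_def by simp
qed

lemma cq: "coprime (q^2+1) (q::nat)"
proof -
  have "q^2+1 = q*q+1" by (simp add: power2_eq_square)
  moreover have "coprime (q*q+1) (q*q)" by (rule coprime_add_one_left)
  ultimately show ?thesis by simp
qed
lemma pos_mod:
  fixes q n a k :: nat
  assumes n: "n = q^2+1" and a: "0 < a" "a < n"
  shows "0 < a*q^k mod n"
proof (rule ccontr)
  assume "\<not> 0 < a*q^k mod n"
  then have "n dvd a*q^k" by (simp add: dvd_eq_mod_eq_0)
  moreover have "coprime n (q^k)" using cq n by simp
  ultimately have "n dvd a" using coprime_dvd_mult_left_iff by blast
  then show False using a by (simp add: nat_dvd_not_less)
qed
lemma coset4:
  fixes q n a :: nat
  assumes n: "n = q^2+1" and a: "0 < a" "a < n"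
  shows "cyc_coset q n a = {a, a*q mod n, n - a, n - a*q mod n}"
proof -
  have e2: "a*q^2 mod n = n - a" using sq_mod[OF n, of a] a by simp
  have e3: "a*q^3 mod n = n - a*q mod n"
  proof -
    have h: "a*q^3 = (a*q)*q^2" by (simp add: eval_nat_numeral)
    have "0 < (a*q) mod n" using pos_mod[OF n a, of 1] by simp
    then show ?thesis using sq_mod[OF n, of "a*q"] by (simp only: h)
  qed
  have S: "a*q^k mod n \<in> {a, a*q mod n, n - a, n - a*q mod n}" for k
  proof (induction k rule: less_induct)
    case (less k)
    show ?case
    proof (cases "k < 4")
      case True
      then have "k = 0 \<or> k = 1 \<or> k = 2 \<or> k = 3" by auto
      then show ?thesis using a e2 e3 by auto
    next
      case False
      define x where "x = a*q^(k-4)"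
      have x0: "0 < x mod n" using pos_mod[OF n a] x_def by simp
      have kk: "k = (k-4) + 2 + 2" using False by simp
      have "a*q^k = (x*q^2)*q^2" unfolding x_def
        by (subst kk, simp only: power_add mult.assoc)
      then have "a*q^k mod n = ((x*q^2) mod n * q^2) mod n" by (simp add: mod_mult_left_eq)
      also have "... = ((n - x mod n) * q^2) mod n" using sq_mod[OF n x0] by simp
      also have "... = n - (n - x mod n) mod n"
        using sq_mod[OF n, of "n - x mod n"] x0 n by simp
      also have "... = x mod n" using x0 n by simp
      finally show ?thesis using less[of "k-4"] False x_def by simp
    qed
  qed
  have T: "y \<in> cyc_coset q n a" if "y \<in> {a, a*q mod n, n - a, n - a*q mod n}" for y
  proof -
    have m: "a*q^k mod n \<in> cyc_coset q n a" for k unfolding cyc_coset_def by blast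
    have "a = a*q^0 mod n" using a by simp
    moreover have "a*q mod n = a*q^1 mod n" by simp
    ultimately show ?thesis using that m[of 0] m[of 1] m[of 2] m[of 3] e2 e3 by auto
  qed
  show ?thesis using S T unfolding cyc_coset_def by blast
qed



lemma e2h: "q \<ge> 1 \<Longrightarrow> (l+1)*(q-1) + l + 1 = l*q + (q::nat)"
  by (cases q) (simp_all add: algebra_simps)

lemma ar1:
  fixes q i j :: nat
  assumes q: "even q" "q \<ge> 2" and j: "1 \<le> j" "j < q" and i: "i \<le> q"
  shows "(i*q+j \<le> j*q - i \<and> i*q+j \<le> q^2+1-(j*q-i)) \<longleftrightarrow> (i+1 \<le> j \<and> i+j+1 \<le> q)"
proof
  assume A: "i*q+j \<le> j*q - i \<and> i*q+j \<le> q^2+1-(j*q-i)"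
  have "j*q \<ge> 1*q" using j by (intro mult_le_mono1) simp
  then have jq: "j*q \<ge> i" using i by linarith
  have ij: "i+1 \<le> j"
  proof (rule ccontr)
    assume "\<not> i+1 \<le> j"
    then have "j*q \<le> i*q" by simp
    then show False using A jq j by linarith
  qed
  have qq: "j*q \<le> q*q" using j by (intro mult_le_mono1) simp
  have A2: "i*q+j \<le> q*q+1-(j*q-i)" using A by (simp only: power2_eq_square)
  have B: "i*q+j+j*q \<le> q*q+1+i" using A2 jq qq by arith
  have "i+j+1 \<le> q"
  proof (rule ccontr)
    assume "\<not> i+j+1 \<le> q"
    then have "q \<le> i+j" by simp
    then have C: "q*q \<le> i*q+j*q" by (metis add_mult_distrib mult_le_mono1)
    then have "j = i+1" using B ij by linarith
    then have "(2*i+1)*q \<le> q*q" using B by (simp add: algebra_simps)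
    then have "2*i+1 \<le> q" using q by (simp only: mult_le_cancel2)
    moreover have "q \<le> 2*i+1" using \<open>q \<le> i+j\<close> \<open>j = i+1\<close> by simp
    ultimately show False using q by presburger
  qed
  then show "i+1 \<le> j \<and> i+j+1 \<le> q" using ij by simp
next
  assume A: "i+1 \<le> j \<and> i+j+1 \<le> q"
  have "(i+1)*q \<le> j*q" using A by (intro mult_le_mono1) simp
  then have 1: "i*q+q \<le> j*q" by (simp add: algebra_simps)
  have "(j+i+1)*q \<le> q*q" using A by (intro mult_le_mono1) simp
  then have 2: "j*q+i*q+q \<le> q*q" by (simp add: algebra_simps)
  show "i*q+j \<le> j*q - i \<and> i*q+j \<le> q^2+1-(j*q-i)"
    using 1 2 A unfolding power2_eq_square by arith
qed

lemma ar2: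
  fixes q i j :: nat
  assumes q: "even q" "q \<ge> 2" and j: "j < q"
  shows "(\<exists>l::nat. l \<le> q div 2 - 1 \<and> l * (q + 1) + 1 \<le> i*q+j \<and> i*q+j \<le> (l + 1) * (q - 1))
     \<longleftrightarrow> (i+1 \<le> j \<and> i+j+1 \<le> q)"
proof
  assume "\<exists>l::nat. l \<le> q div 2 - 1 \<and> l * (q + 1) + 1 \<le> i*q+j \<and> i*q+j \<le> (l + 1) * (q - 1)"
  then obtain l where l: "l * (q + 1) + 1 \<le> i*q+j" "i*q+j \<le> (l + 1) * (q - 1)" by blast
  have e1: "l*(q+1) = l*q + l" by (simp add: algebra_simps)
  have e2: "(l+1)*(q-1) + l + 1 = l*q + q" using q
    by (intro e2h) simp
  have "l < i+1"
  proof (rule ccontr)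
    assume "\<not> l < i+1"
    then have "(i+1)*q \<le> l*q" by (intro mult_le_mono1) simp
    then show False using l(1) e1 j by (simp add: algebra_simps)
  qed
  moreover have "i < l+1"
  proof (rule ccontr)
    assume "\<not> i < l+1"
    then have "(l+1)*q \<le> i*q" by (intro mult_le_mono1) simp
    then show False using l(2) e2 by (simp add: algebra_simps)
  qed
  ultimately have li: "l = i" by simp
  show "i+1 \<le> j \<and> i+j+1 \<le> q" using l e1 e2 unfolding li by linarith
next
  assume A: "i+1 \<le> j \<and> i+j+1 \<le> q"
  have e1: "i*(q+1) = i*q + i" by (simp add: algebra_simps)
  have e2: "(i+1)*(q-1) + i + 1 = i*q + q" using q
    by (intro e2h) simp
  have "i \<le> q div 2 - 1" using A q by presburger
  then show "\<exists>l::nat. l \<le> q div 2 - 1 \<and> l * (q + 1) + 1 \<le> i*q+j \<and> i*q+j \<le> (l + 1) * (q - 1)"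
    using A e1 e2 by (intro exI[of _ i]) linarith
qed

lemma ar0:
  fixes q i :: nat
  assumes q: "q \<ge> 2"
  shows "\<not> (\<exists>l::nat. l * (q + 1) + 1 \<le> i*q \<and> i*q \<le> (l + 1) * (q - 1))"
proof
  assume "\<exists>l::nat. l * (q + 1) + 1 \<le> i*q \<and> i*q \<le> (l + 1) * (q - 1)"
  then obtain l where l: "l * (q + 1) + 1 \<le> i*q" "i*q \<le> (l + 1) * (q - 1)" by blast
  have e1: "l*(q+1) = l*q + l" by (simp add: algebra_simps)
  have e2: "(l+1)*(q-1) + l + 1 = l*q + q" using q
    by (intro e2h) simp
  have "l < i"
  proof (rule ccontr)
    assume "\<not> l < i"
    then have "i*q \<le> l*q" by (intro mult_le_mono1) simp
    then show False using l(1) e1 by linarith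
  qed
  moreover have "i < l+1"
  proof (rule ccontr)
    assume "\<not> i < l+1"
    then have "(l+1)*q \<le> i*q" by (intro mult_le_mono1) simp
    then show False using l(2) e2 by (simp add: algebra_simps)
  qed
  ultimately show False by simp
qed

lemma ar3:
  fixes q i j :: nat
  assumes q: "even q" "q \<ge> 2" and A: "i+1 \<le> j" "i+j+1 \<le> q"
  shows "(i*q+j) + (j*q-i) \<noteq> q^2+1"
proof
  assume E: "(i*q+j) + (j*q-i) = q^2+1"
  have "j*1 \<le> j*q" using q by (intro mult_le_mono2) simp
  then have jq: "i \<le> j*q" using A by linarith
  have E2: "(i+j)*q + j = q*q + 1 + i" using E jq by (simp add: algebra_simps power2_eq_square)
  show False
  proof (cases "i+j+2 \<le> q")
    case True
    then have "(i+j+2)*q \<le> q*q" by (intro mult_le_mono1)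
    then have "(i+j)*q + 2*q \<le> q*q" by (simp add: algebra_simps)
    then show False using E2 A by linarith
  next
    case False
    then have "i+j+1 = q" using A by simp
    then have "(i+j)*q + q = q*q" by (metis add_mult_distrib mult_1)
    then show False using E2 A by linarith
  qed
qed



lemma bform:
  fixes q n a i j :: nat
  assumes n: "n = q^2+1" and a: "a = i*q+j" and j: "1 \<le> j" "j < q" and i: "i \<le> q"
  shows "a*q mod n = j*q - i"
proof -
  have "j*q \<ge> 1*q" using j by (intro mult_le_mono1) simp
  then have jq: "j*q \<ge> i" using i by linarith
  have jq2: "j*q < q*q" using j by (intro mult_less_mono1) simp_all
  have e: "a*q = i*(q*q) + j*q" unfolding a by (simp add: algebra_simps)
  have "a*q = i*n + (j*q - i)" unfolding e n power2_eq_square using jq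
    by (simp add: algebra_simps)
  then have "a*q mod n = (j*q - i) mod n" by simp
  also have "... = j*q - i"
  proof -
    have "j*q - i < n" using jq2 n unfolding power2_eq_square by linarith
    then show ?thesis by simp
  qed
  finally show ?thesis .
qed

lemma bform0:
  fixes q n i :: nat
  assumes n: "n = q^2+1" and i: "1 \<le> i" "i < n"
  shows "(i*q)*q mod n = n - i"
proof -
  have "i*q^2 mod n = n - i mod n" using sq_mod[OF n, of i] i by simp
  then show ?thesis using i by (simp add: power2_eq_square mult.assoc)
qed

theorem lemma8:
  fixes q m n :: nat
  assumes "m \<ge> 1" and "q = 2 ^ m" and "n = q ^ 2 + 1"
  shows "(\<forall>a. 1 \<le> a \<and> a \<le> n - 1 \<longrightarrow>
            (a \<in> MinRep q n \<longleftrightarrow>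
              (\<exists>l::nat. l \<le> q div 2 - 1 \<and> l * (q + 1) + 1 \<le> a \<and> a \<le> (l + 1) * (q - 1))))
       \<and> (\<forall>a \<in> MinRep q n. a \<noteq> 0 \<longrightarrow> card (cyc_coset q n a) = 4)"
proof -
  note n = assms(3)
  have qe: "even q" using assms(1,2) by simp
  have q2: "q \<ge> 2" using assms(1,2)
    using power_increasing[of 1 m "2::nat"] by simp
  have nodd: "odd n" using qe n by simp
  have key: "(a \<in> MinRep q n \<longleftrightarrow>
              (\<exists>l::nat. l \<le> q div 2 - 1 \<and> l * (q + 1) + 1 \<le> a \<and> a \<le> (l + 1) * (q - 1)))
        \<and> (a \<in> MinRep q n \<longrightarrow> card (cyc_coset q n a) = 4)" if a: "1 \<le> a" "a \<le> n - 1" for a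
  proof -
    have an: "0 < a" "a < n" using a n by auto
    define b where "b = a*q mod n"
    have b: "0 < b" "b < n" using pos_mod[OF n an, of 1] n unfolding b_def by auto
    have C: "cyc_coset q n a = {a, b, n-a, n-b}" using coset4[OF n an] b_def by simp
    have M: "a \<in> MinRep q n \<longleftrightarrow> (a \<le> b \<and> a \<le> n-a \<and> a \<le> n-b)"
    proof -
      have "a \<in> MinRep q n \<longleftrightarrow> Min {a, b, n-a, n-b} = a" using an C unfolding MinRep_def by auto
      also have "... \<longleftrightarrow> (a \<le> b \<and> a \<le> n-a \<and> a \<le> n-b)"
        by (subst Min_eq_iff) auto
      finally show ?thesis .
    qed
    define i where "i = a div q"
    define j where "j = a mod q"
    have aij: "a = i*q + j" unfolding i_def j_def by simp
    have jq: "j < q" unfolding j_def using q2 by simp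
    have "a \<le> q*q" using a n by (simp add: power2_eq_square)
    then have iq: "i \<le> q" unfolding i_def using q2
      by (metis div_le_mono nonzero_mult_div_cancel_left not_numeral_le_zero le_zero_eq)
    show ?thesis
    proof (cases "j = 0")
      case True
      then have ai: "a = i*q" using aij by simp
      then have i1: "1 \<le> i" using an by (cases i) auto
      have "i*1 < i*q" using i1 q2 by (intro mult_less_mono2) auto
      then have ilt: "i < a" using ai by simp
      have "b = n - i" unfolding b_def ai using bform0[OF n i1] ilt an by simp
      then have "\<not> a \<in> MinRep q n" using M ilt an by simp
      moreover have "\<not> (\<exists>l::nat. l \<le> q div 2 - 1 \<and> l * (q + 1) + 1 \<le> a \<and> a \<le> (l + 1) * (q - 1))"
        using ar0[OF q2, of i] ai by blast
      ultimately show ?thesis by blast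
    next
      case False
      then have j1: "1 \<le> j" by simp
      have bb: "b = j*q - i" unfolding b_def using bform[OF n aij j1 jq iq] .
      have R: "a \<in> MinRep q n \<longleftrightarrow> (i+1 \<le> j \<and> i+j+1 \<le> q)"
      proof -
        have "a \<in> MinRep q n \<longleftrightarrow> (a \<le> b \<and> a \<le> n-b)" using M b by auto
        also have "... \<longleftrightarrow> (i+1 \<le> j \<and> i+j+1 \<le> q)"
          using ar1[OF qe q2 j1 jq iq] unfolding aij bb n by simp
        finally show ?thesis .
      qed
      have R2: "(\<exists>l::nat. l \<le> q div 2 - 1 \<and> l * (q + 1) + 1 \<le> a \<and> a \<le> (l + 1) * (q - 1))
          \<longleftrightarrow> (i+1 \<le> j \<and> i+j+1 \<le> q)" unfolding aij using ar2[OF qe q2 jq] .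
      have card: "card (cyc_coset q n a) = 4" if mr: "a \<in> MinRep q n"
      proof -
        have A: "i+1 \<le> j" "i+j+1 \<le> q" using R mr by auto
        have "(i+1)*q \<le> j*q" using A by (intro mult_le_mono1) simp
        then have "i*q + q \<le> j*q" by (simp add: algebra_simps)
        then have ab: "a < b" unfolding aij bb using A by linarith
        have s: "a + b \<noteq> n" using ar3[OF qe q2 A] unfolding aij bb n .
        have p1: "a + a \<noteq> n" using nodd by presburger
        have p2: "b + b \<noteq> n" using nodd by presburger
        have "a \<noteq> b" "a \<noteq> n-a" "a \<noteq> n-b" "b \<noteq> n-a" "b \<noteq> n-b" "n-a \<noteq> n-b"
          using ab s p1 p2 an b by linarith+
        then show ?thesis unfolding C by simp
      qed
      show ?thesis using R R2 card by blast
    qed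
  qed
  show ?thesis
  proof (intro conjI allI impI ballI)
    fix a assume "1 \<le> a \<and> a \<le> n - 1"
    then show "(a \<in> MinRep q n \<longleftrightarrow>
              (\<exists>l::nat. l \<le> q div 2 - 1 \<and> l * (q + 1) + 1 \<le> a \<and> a \<le> (l + 1) * (q - 1)))"
      using key by blast
  next
    fix a assume "a \<in> MinRep q n" "a \<noteq> 0"
    moreover then have "a < n" unfolding MinRep_def by simp
    ultimately show "card (cyc_coset q n a) = 4" using key[of a] by simp
  qed
qed

end
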